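(* For every sequence $a\in\mathcal{A}$: if $a$ is a member of the Catalan family $\mathcal{C}$ then $\delta a=a$; otherwise $a<\delta a$ in the lexicographic order (on sequences of the same length).
   Context: $\mathcal{A}$ is the set of finite integer sequences $a=(a_0,\dots,a_n)$ (any $n\ge0$) with $0\le a_i\le i$ for all $i$; $\mathcal{A}_n$ denotes those of length $n+1$. The map $\delta:\mathcal{A}\to\mathcal{A}$ is defined by $(\delta a)_i=\#\{j: j<i,\ a_j<a_i\}$ (it preserves length). Lexicographic order on $\mathcal{A}_n$: $a<b$ iff $a_i<b_i$ at the first index where they differ. The Catalan family $\mathcal{C}\subseteq\mathcal{A}$ is defined recursively together with, for each member $a$, a "sibling list" $L(a)$, a finite strictly increasing list of integers: $(0)\in\mathcal{C}$ with $L((0))=(0)$. If $a=(a_0,\dots,a_n)\in\mathcal{C}$ with $L(a)=(s_0,s_1,\dots,s_m)$ and $a_n=s_i$, then the children of $a$ are the sequences $(a_0,\dots,a_n,t)$ for $t\in\{s_0,s_1,\dots,s_i,n+1\}$; all of them belong to $\mathcal{C}$ and each has sibling list $(s_0,\dots,s_i,n+1)$. $\mathcal{C}$ consists exactly of the sequences obtained this way. (Thus e.g. generation 1 members are $(0,0),(0,1)$; generation 2 members are $(0,0,0),(0,0,2),(0,1,0),(0,1,1),(0,1,2)$.) *)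

theory Defs
  imports Main
begin

text \<open>Sequences (a_0,...,a_n) are represented as nonempty lists; a!i is a_i.\<close>

definition inA :: "nat list \<Rightarrow> bool" where
  "inA a \<longleftrightarrow> a \<noteq> [] \<and> (\<forall>i < length a. a ! i \<le> i)"

definition delta :: "nat list \<Rightarrow> nat list" where
  "delta a = map (\<lambda>i. card {j. j < i \<and> a ! j < a ! i}) [0..<length a]"

definition lex_less :: "nat list \<Rightarrow> nat list \<Rightarrow> bool" where
  "lex_less a b \<longleftrightarrow> length a = length b \<and>
     (\<exists>k < length a. (\<forall>j < k. a ! j = b ! j) \<and> a ! k < b ! k)"

text \<open>Catalan family with sibling lists: catalan_sib a L means a is in C with sibling list L.
  For a = (a_0..a_n) we have length a = n+1; a_n = s_i is L ! i.\<close>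
inductive catalan_sib :: "nat list \<Rightarrow> nat list \<Rightarrow> bool" where
  base: "catalan_sib [0] [0]"
| step: "\<lbrakk> catalan_sib a L; i < length L; last a = L ! i;
           t \<in> set (take (Suc i) L) \<or> t = length a \<rbrakk>
         \<Longrightarrow> catalan_sib (a @ [t]) (take (Suc i) L @ [length a])"

definition catalan :: "nat list \<Rightarrow> bool" where
  "catalan a \<longleftrightarrow> (\<exists>L. catalan_sib a L)"

end

theory Submission
  imports Defs
begin

definition cnt :: "nat list \<Rightarrow> nat \<Rightarrow> nat" where
  "cnt xs t = length (filter (\<lambda>y. y < t) xs)"

lemma cnt_snoc: "cnt (xs @ [x]) t = cnt xs t + (if x < t then 1 else 0)"
  by (simp add: cnt_def)

lemma cnt_all: "\<forall>y\<in>set xs. y < t \<Longrightarrow> cnt xs t = length xs"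
  by (simp add: cnt_def)

lemma set_take_sorted:
  fixes L :: "nat list"
  assumes "sorted_wrt (<) L" "i < length L"
  shows "(s \<in> set (take (Suc i) L)) \<longleftrightarrow> (s \<in> set L \<and> s \<le> L!i)"
proof
  assume "s \<in> set (take (Suc i) L)"
  then obtain k where k: "k < length (take (Suc i) L)" "s = take (Suc i) L ! k"
    by (metis in_set_conv_nth)
  then have "k \<le> i" "k < length L" "s = L ! k" by auto
  then show "s \<in> set L \<and> s \<le> L!i" using assms
  proof -
    have "L!k \<le> L!i" using assms \<open>k \<le> i\<close> \<open>k < length L\<close>
      by (cases "k = i") (auto simp: sorted_wrt_iff_nth_less intro: less_imp_le)
    then show ?thesis using \<open>s = L!k\<close> \<open>k < length L\<close> by auto
  qed
next
  assume "s \<in> set L \<and> s \<le> L!i"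
  then obtain k where k: "k < length L" "s = L ! k" "L!k \<le> L!i"
    by (metis in_set_conv_nth)
  have "k \<le> i"
  proof (rule ccontr)
    assume "\<not> k \<le> i"
    then have "L!i < L!k" using assms k sorted_wrt_nth_less by (metis not_le)
    then show False using k by simp
  qed
  then show "s \<in> set (take (Suc i) L)" using k
    by (metis in_set_conv_nth le_imp_less_Suc length_take min_less_iff_conj nth_take)
qed

lemma inv:
  "catalan_sib a L \<Longrightarrow> a \<noteq> [] \<and> (\<forall>y\<in>set a. y < length a) \<and> sorted_wrt (<) L \<and>
     set L = {t. t < length a \<and> cnt (butlast a) t = t} \<and>
     (\<forall>t<length a. t \<le> cnt (butlast a) t) \<and> last a \<in> set L"
proof (induction rule: catalan_sib.induct)
  case base
  then show ?case by (auto simp: cnt_def)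
next
  case (step a L i t)
  define n where "n = length a"
  from step.IH have ne: "a \<noteq> []" and lt: "\<forall>y\<in>set a. y < n"
    and so: "sorted_wrt (<) L"
    and sL: "set L = {t. t < n \<and> cnt (butlast a) t = t}"
    and ge: "\<forall>t<n. t \<le> cnt (butlast a) t" and la: "last a \<in> set L"
    by (auto simp: n_def)
  have adec: "a = butlast a @ [last a]" using ne by simp
  have cnta: "cnt a s = cnt (butlast a) s + (if last a < s then 1 else 0)" for s
    by (subst adec, rule cnt_snoc)
  have Lsub: "\<forall>y\<in>set L. y < n" using sL by auto
  have tk: "set (take (Suc i) L) \<subseteq> set L" by (rule set_take_subset)
  have cn: "cnt a n = n" using cnt_all[OF lt] n_def by simp
  have key: "s \<in> set (take (Suc i) L) \<longleftrightarrow> cnt a s = s" if "s < n" for s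
  proof -
    have "s \<in> set (take (Suc i) L) \<longleftrightarrow> s \<in> set L \<and> s \<le> L!i"
      using set_take_sorted[OF so step.hyps(2)] .
    also have "\<dots> \<longleftrightarrow> cnt (butlast a) s = s \<and> s \<le> last a"
      using sL that step.hyps(3) by auto
    also have "\<dots> \<longleftrightarrow> cnt a s = s"
      using cnta[of s] ge that by (auto split: if_splits)
    finally show ?thesis .
  qed
  show ?case
  proof (intro conjI)
    show "a @ [t] \<noteq> []" by simp
    show "\<forall>y\<in>set (a @ [t]). y < length (a @ [t])"
      using lt step.hyps(4) tk Lsub n_def by (auto, meson less_SucI subsetD)
    show "sorted_wrt (<) (take (Suc i) L @ [length a])"
      using so tk Lsub n_def by (auto simp: sorted_wrt_append sorted_wrt_take)
    show "set (take (Suc i) L @ [length a]) =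
       {ta. ta < length (a @ [t]) \<and> cnt (butlast (a @ [t])) ta = ta}"
    proof (rule set_eqI)
      fix s
      show "s \<in> set (take (Suc i) L @ [length a]) \<longleftrightarrow>
        s \<in> {ta. ta < length (a @ [t]) \<and> cnt (butlast (a @ [t])) ta = ta}"
        using key[of s] cn tk Lsub n_def
        by (cases "s < n") (auto, (metis less_antisym)?)
    qed
    show "\<forall>ta<length (a @ [t]). ta \<le> cnt (butlast (a @ [t])) ta"
    proof (intro allI impI)
      fix s assume "s < length (a @ [t])"
      then have "s < n \<or> s = n" using n_def by auto
      then show "s \<le> cnt (butlast (a @ [t])) s"
        using ge cnta[of s] cn by (auto split: if_splits)
    qed
    show "last (a @ [t]) \<in> set (take (Suc i) L @ [length a])"
      using step.hyps(4) by auto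
  qed
qed


lemma delta_alt: "delta a = map (\<lambda>i. cnt (take i a) (a!i)) [0..<length a]"
proof -
  have "card {j. j < i \<and> a ! j < a ! i} = cnt (take i a) (a!i)" if "i < length a" for i
  proof -
    have "cnt (take i a) (a!i) = card {j. j < length (take i a) \<and> take i a ! j < a!i}"
      unfolding cnt_def by (rule length_filter_conv_card)
    also have "{j. j < length (take i a) \<and> take i a ! j < a!i} = {j. j < i \<and> a ! j < a ! i}"
      using that by auto
    finally show ?thesis by simp
  qed
  then show ?thesis unfolding delta_def by simp
qed

lemma length_delta[simp]: "length (delta a) = length a"
  by (simp add: delta_def)

lemma delta_snoc: "delta (xs @ [x]) = delta xs @ [cnt xs x]"
  unfolding delta_alt by (auto simp: nth_append)

lemma catalan_butlast: "catalan (xs @ [x]) \<Longrightarrow> xs \<noteq> [] \<Longrightarrow> catalan xs"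
  unfolding catalan_def
  by (auto elim: catalan_sib.cases)

lemma catalan_snoc:
  assumes "catalan xs" "x \<le> length xs"
  shows "(catalan (xs @ [x]) \<longleftrightarrow> cnt xs x = x) \<and> x \<le> cnt xs x"
proof -
  obtain L where L: "catalan_sib xs L" using assms(1) catalan_def by auto
  note I = inv[OF L]
  have ne: "xs \<noteq> []" and lt: "\<forall>y\<in>set xs. y < length xs"
    and so: "sorted_wrt (<) L"
    and sL: "set L = {t. t < length xs \<and> cnt (butlast xs) t = t}"
    and ge: "\<forall>t<length xs. t \<le> cnt (butlast xs) t" and la: "last xs \<in> set L"
    using I by auto
  obtain i where i: "i < length L" "last xs = L!i" using la by (metis in_set_conv_nth)
  have adec: "xs = butlast xs @ [last xs]" using ne by simp
  have cnta: "cnt xs s = cnt (butlast xs) s + (if last xs < s then 1 else 0)" for s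
    by (subst adec, rule cnt_snoc)
  have cn: "cnt xs (length xs) = length xs" using cnt_all[OF lt] by simp
  have g: "x \<le> cnt xs x"
  proof (cases "x = length xs")
    case False
    then have "x < length xs" using assms(2) by simp
    then have "x \<le> cnt (butlast xs) x" using ge by blast
    then show ?thesis using cnta[of x] by simp
  qed (use cn in simp)
  have "catalan (xs @ [x]) \<longleftrightarrow> cnt xs x = x"
  proof
    assume "catalan (xs @ [x])"
    then obtain L' where L': "catalan_sib (xs @ [x]) L'" using catalan_def by auto
    from inv[OF L'] show "cnt xs x = x" by auto
  next
    assume c: "cnt xs x = x"
    have "x \<in> set (take (Suc i) L) \<or> x = length xs"
    proof (cases "x = length xs")
      case False
      then have xl: "x < length xs" using assms(2) by simp
      have "cnt (butlast xs) x = x \<and> x \<le> last xs"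
        using c cnta[of x] ge xl by (auto split: if_splits)
      then have "x \<in> set L \<and> x \<le> L!i" using sL xl i by auto
      then show ?thesis using set_take_sorted[OF so i(1)] by simp
    qed simp
    then have "catalan_sib (xs @ [x]) (take (Suc i) L @ [length xs])"
      using catalan_sib.step[OF L i(1) i(2)] by blast
    then show "catalan (xs @ [x])" using catalan_def by auto
  qed
  with g show ?thesis by simp
qed

lemma main_aux:
  "inA a \<Longrightarrow> (catalan a \<and> delta a = a) \<or> (\<not> catalan a \<and> lex_less a (delta a))"
proof (induction a rule: rev_induct)
  case Nil
  then show ?case by (simp add: inA_def)
next
  case (snoc x xs)
  show ?case
  proof (cases "xs = []")
    case True
    then have "x = 0" using snoc.prems by (auto simp: inA_def)
    then show ?thesis using True
      by (auto simp: catalan_def delta_def intro: catalan_sib.base)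
  next
    case False
    have P: "\<forall>i<length (xs @ [x]). (xs @ [x]) ! i \<le> i" using snoc.prems
      unfolding inA_def by blast
    have inxs: "inA xs" unfolding inA_def
    proof (intro conjI allI impI)
      show "xs \<noteq> []" by (rule False)
      fix i assume "i < length xs"
      then show "xs ! i \<le> i" using P[rule_format, of i] by (simp add: nth_append)
    qed
    have xle: "x \<le> length xs" using P[rule_format, of "length xs"] by simp
    from snoc.IH[OF inxs] show ?thesis
    proof
      assume h: "catalan xs \<and> delta xs = xs"
      note cs = catalan_snoc[OF conjunct1[OF h] xle]
      show ?thesis
      proof (cases "cnt xs x = x")
        case True
        then show ?thesis using cs h by (simp add: delta_snoc)
      next
        case nf: False
        then have "x < cnt xs x" using cs by simp
        then have "lex_less (xs @ [x]) (delta (xs @ [x]))"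
          unfolding lex_less_def delta_snoc using h
          by (auto intro!: exI[of _ "length xs"] simp: nth_append length_delta)
        then show ?thesis using cs nf by simp
      qed
    next
      assume h: "\<not> catalan xs \<and> lex_less xs (delta xs)"
      then have nc: "\<not> catalan (xs @ [x])" using catalan_butlast False by blast
      from h obtain k where k: "length xs = length (delta xs)" "k < length xs"
         "\<forall>j<k. xs ! j = delta xs ! j" "xs ! k < delta xs ! k"
        unfolding lex_less_def by blast
      have "lex_less (xs @ [x]) (delta (xs @ [x]))"
        unfolding lex_less_def delta_snoc using k
        by (auto intro!: exI[of _ k] simp: nth_append)
      then show ?thesis using nc by simp
    qed
  qed
qed

theorem mainTheorem2:
  fixes a :: "nat list"
  assumes "inA a"
  shows "(catalan a \<longrightarrow> delta a = a) \<and> (\<not> catalan a \<longrightarrow> lex_less a (delta a))"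
  using main_aux[OF assms] by auto

end
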